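(* Let $A$ be a type and $t$ a term. (1) If $\mathbb G\vdash^* t:A;\mathbb D$, then $t\in\mathbb I(A)$. (2) If $t\in\mathbb I(A)$, then $\mathbb G\vdash^* t:A;\mathbb D$.
   Context: $\lambda\mu$-terms: $t::= x\mid \lambda x.t\mid (t\;t)\mid \mu a.t\mid (a\;t)$ over disjoint infinite sets of $\lambda$-variables and $\mu$-variables; types built from propositional variables and $\perp$ with $\to$. Reduction $(\lambda x.u\;v)\triangleright u[x:=v]$, $(\mu a.u\;v)\triangleright\mu a.u[a:=^*v]$ ($u[a:=^*v]$ replaces each subterm $(a\;w)$ of $u$ by $(a\;(w\;v))$), $\triangleright^*$ reflexive transitive compatible closure. Typing rules for $\Gamma\vdash t:A;\Delta$: (ax) $\Gamma\vdash x:A;\Delta$ if $x:A\in\Gamma$; ($\to_i$) from $\Gamma,x:A\vdash t:B;\Delta$ infer $\Gamma\vdash\lambda x.t:A\to B;\Delta$; ($\to_e$) from $\Gamma\vdash u:A\to B;\Delta$, $\Gamma\vdash v:A;\Delta$ infer $\Gamma\vdash(u\;v):B;\Delta$; ($\mu$) from $\Gamma\vdash t:\perp;\Delta,a:A$ infer $\Gamma\vdash\mu a.t:A;\Delta$; ($\perp$) from $\Gamma\vdash t:A;\Delta,a:A$ infer $\Gamma\vdash(a\;t):\perp;\Delta,a:A$. Term model: $\Omega=\{x_i\}_{i\in\mathbb N}\cup\{a_j\}_{j\in\mathbb N}$ enumerates infinite sets of $\lambda$- and $\mu$-variables; $(A_i)_{i\in\mathbb N}$ enumerates all types with each type occurring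 infinitely often; $(B_j)_{j\in\mathbb N}$ enumerates all types with $\perp$ occurring infinitely often. $\mathbb G=\{x_i:A_i\}$, $\mathbb D=\{a_j:B_j\}$. For a term $u$, $\mathbb G\vdash u:C;\mathbb D$ means $Fv(u)\subseteq\Omega$ and $\mathbb G_u\vdash u:C;\mathbb D_u$ where $\mathbb G_u,\mathbb D_u$ are the restrictions of $\mathbb G,\mathbb D$ to the free variables of $u$; $\mathbb G\vdash^* u:C;\mathbb D$ means there is $u'$ with $u\triangleright^*u'$ and $\mathbb G\vdash u':C;\mathbb D$. $\mathbb S=\{t:\mathbb G\vdash^*t:\perp;\mathbb D\}$, and for each propositional variable $X$, $\mathbb R_X=\{t:\mathbb G\vdash^*t:X;\mathbb D\}$. For sets of terms, $\mathcal K\leadsto\mathcal L=\{t:(t\;u)\in\mathcal L\ \forall u\in\mathcal K\}$. The interpretation $\mathbb I$ is defined by $\mathbb I(\perp)=\mathbb S$, $\mathbb I(X)=\mathbb R_X$, $\mathbb I(B\to C)=\mathbb I(B)\leadsto\mathbb I(C)$. *)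

theory Defs
  imports Main
begin

datatype ty = PV nat | Bot | Arr ty ty

text \<open>Lambda-mu terms in de Bruijn notation with two disjoint index spaces:
  lambda-variables (Var) bound by Lam, and mu-variables (in Named a t = (a t)) bound by Mu.
  Free lambda-variable x_i is Var i (outside all binders), free mu-variable a_j is index j.\<close>
datatype trm = Var nat | Lam trm | App trm trm | Mu trm | Named nat trm

fun liftL :: "nat \<Rightarrow> trm \<Rightarrow> trm" where
  "liftL k (Var i) = (if i < k then Var i else Var (Suc i))"
| "liftL k (Lam t) = Lam (liftL (Suc k) t)"
| "liftL k (App t u) = App (liftL k t) (liftL k u)"
| "liftL k (Mu t) = Mu (liftL k t)"
| "liftL k (Named a t) = Named a (liftL k t)"

fun liftM :: "nat \<Rightarrow> trm \<Rightarrow> trm" where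
  "liftM k (Var i) = Var i"
| "liftM k (Lam t) = Lam (liftM k t)"
| "liftM k (App t u) = App (liftM k t) (liftM k u)"
| "liftM k (Mu t) = Mu (liftM (Suc k) t)"
| "liftM k (Named a t) = Named (if a < k then a else Suc a) (liftM k t)"

fun substL :: "trm \<Rightarrow> nat \<Rightarrow> trm \<Rightarrow> trm" where
  "substL (Var i) k v = (if i < k then Var i else if i = k then v else Var (i - 1))"
| "substL (Lam t) k v = Lam (substL t (Suc k) (liftL 0 v))"
| "substL (App t u) k v = App (substL t k v) (substL u k v)"
| "substL (Mu t) k v = Mu (substL t k (liftM 0 v))"
| "substL (Named a t) k v = Named a (substL t k v)"

fun substM :: "trm \<Rightarrow> nat \<Rightarrow> trm \<Rightarrow> trm" where
  "substM (Var i) k v = Var i"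
| "substM (Lam t) k v = Lam (substM t k (liftL 0 v))"
| "substM (App t u) k v = App (substM t k v) (substM u k v)"
| "substM (Mu t) k v = Mu (substM t (Suc k) (liftM 0 v))"
| "substM (Named a t) k v =
     (if a = k then Named a (App (substM t k v) v) else Named a (substM t k v))"

inductive red1 :: "trm \<Rightarrow> trm \<Rightarrow> bool" where
  beta: "red1 (App (Lam u) v) (substL u 0 v)"
| mu: "red1 (App (Mu u) v) (Mu (substM u 0 (liftM 0 v)))"
| lam: "red1 t t' \<Longrightarrow> red1 (Lam t) (Lam t')"
| appL: "red1 t t' \<Longrightarrow> red1 (App t u) (App t' u)"
| appR: "red1 u u' \<Longrightarrow> red1 (App t u) (App t u')"
| muc: "red1 t t' \<Longrightarrow> red1 (Mu t) (Mu t')"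
| named: "red1 t t' \<Longrightarrow> red1 (Named a t) (Named a t')"

abbreviation reds :: "trm \<Rightarrow> trm \<Rightarrow> bool" where
  "reds \<equiv> red1\<^sup>*\<^sup>*"

inductive typing :: "(nat \<Rightarrow> ty) \<Rightarrow> trm \<Rightarrow> ty \<Rightarrow> (nat \<Rightarrow> ty) \<Rightarrow> bool" where
  ax: "\<Gamma> x = A \<Longrightarrow> typing \<Gamma> (Var x) A \<Delta>"
| arrI: "typing (case_nat A \<Gamma>) t B \<Delta> \<Longrightarrow> typing \<Gamma> (Lam t) (Arr A B) \<Delta>"
| arrE: "typing \<Gamma> u (Arr A B) \<Delta> \<Longrightarrow> typing \<Gamma> v A \<Delta> \<Longrightarrow> typing \<Gamma> (App u v) B \<Delta>"
| muI: "typing \<Gamma> t Bot (case_nat A \<Delta>) \<Longrightarrow> typing \<Gamma> (Mu t) A \<Delta>"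
| botI: "\<Delta> a = A \<Longrightarrow> typing \<Gamma> t A \<Delta> \<Longrightarrow> typing \<Gamma> (Named a t) Bot \<Delta>"

text \<open>The term model, relative to the enumerations G (x_i : G i) and D (a_j : D j).\<close>
definition typstar :: "(nat \<Rightarrow> ty) \<Rightarrow> (nat \<Rightarrow> ty) \<Rightarrow> trm \<Rightarrow> ty \<Rightarrow> bool" where
  "typstar G D t C \<longleftrightarrow> (\<exists>u. reds t u \<and> typing G u C D)"

definition SS :: "(nat \<Rightarrow> ty) \<Rightarrow> (nat \<Rightarrow> ty) \<Rightarrow> trm set" where
  "SS G D = {t. typstar G D t Bot}"

definition RR :: "(nat \<Rightarrow> ty) \<Rightarrow> (nat \<Rightarrow> ty) \<Rightarrow> nat \<Rightarrow> trm set" where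
  "RR G D X = {t. typstar G D t (PV X)}"

definition arrow_set :: "trm set \<Rightarrow> trm set \<Rightarrow> trm set" where
  "arrow_set K L = {t. \<forall>u\<in>K. App t u \<in> L}"

fun interp :: "(nat \<Rightarrow> ty) \<Rightarrow> (nat \<Rightarrow> ty) \<Rightarrow> ty \<Rightarrow> trm set" where
  "interp G D Bot = SS G D"
| "interp G D (PV X) = RR G D X"
| "interp G D (Arr B C) = arrow_set (interp G D B) (interp G D C)"

end

theory Submission
  imports Defs
begin

fun psL :: "(nat \<Rightarrow> trm) \<Rightarrow> trm \<Rightarrow> trm" where
  "psL \<sigma> (Var i) = \<sigma> i"
| "psL \<sigma> (Lam t) = Lam (psL (case_nat (Var 0) (\<lambda>i. liftL 0 (\<sigma> i))) t)"
| "psL \<sigma> (App t u) = App (psL \<sigma> t) (psL \<sigma> u)"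
| "psL \<sigma> (Mu t) = Mu (psL (\<lambda>i. liftM 0 (\<sigma> i)) t)"
| "psL \<sigma> (Named a t) = Named a (psL \<sigma> t)"

definition sk :: "nat \<Rightarrow> trm \<Rightarrow> nat \<Rightarrow> trm" where
  "sk k v i = (if i < k then Var i else if i = k then v else Var (i - 1))"

lemma substL_ps: "substL t k v = psL (sk k v) t"
proof (induction t arbitrary: k v)
  case (Lam t)
  have "case_nat (Var 0) (\<lambda>i. liftL 0 (sk k v i)) = sk (Suc k) (liftL 0 v)"
    by (rule ext) (auto simp: sk_def split: nat.split)
  then show ?case using Lam by simp
next
  case (Mu t)
  have "(\<lambda>i. liftM 0 (sk k v i)) = sk k (liftM 0 v)"
    by (rule ext) (auto simp: sk_def)
  then show ?case using Mu by simp
qed (auto simp: sk_def)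

lemma liftL_ps: "liftL k t = psL (\<lambda>i. Var (if i < k then i else Suc i)) t"
proof (induction t arbitrary: k)
  case (Lam t)
  have "case_nat (Var 0) (\<lambda>i. liftL 0 (Var (if i < k then i else Suc i)))
        = (\<lambda>i. Var (if i < Suc k then i else Suc i))"
    by (rule ext) (auto split: nat.split)
  then show ?case using Lam by simp
qed auto

definition upr :: "(nat \<Rightarrow> nat) \<Rightarrow> nat \<Rightarrow> nat" where
  "upr f = case_nat 0 (\<lambda>i. Suc (f i))"

lemma upS_Var: "case_nat (Var 0) (\<lambda>i. Var (Suc (f i))) = (\<lambda>i. Var (upr f i))"
  by (rule ext) (auto simp: upr_def split: nat.split)

lemma psL_ren_Lam: "psL (\<lambda>i. Var (f i)) (Lam t) = Lam (psL (\<lambda>i. Var (upr f i)) t)"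
  by (simp add: upS_Var)

lemma psL_ren_Mu: "psL (\<lambda>i. Var (f i)) (Mu t) = Mu (psL (\<lambda>i. Var (f i)) t)"
  by simp

lemma upr_simps[simp]: "upr f 0 = 0" "upr f (Suc i) = Suc (f i)"
  by (auto simp: upr_def)

lemma upS_Var0: "case_nat (Var 0) (\<lambda>i. Var (Suc i)) = Var"
  by (rule ext) (simp split: nat.split)

lemma psL_Var: "psL Var t = t"
  by (induction t) (simp_all add: upS_Var0)

inductive XR :: "nat \<Rightarrow> nat set \<Rightarrow> (nat \<Rightarrow> nat) \<Rightarrow> trm \<Rightarrow> trm \<Rightarrow> bool"
  and XS :: "nat \<Rightarrow> nat set \<Rightarrow> (nat \<Rightarrow> nat) \<Rightarrow> trm \<Rightarrow> trm \<Rightarrow> bool" where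
  xvar: "XR X K \<rho> (Var i) (Var (\<rho> i))"
| xlam: "XR (Suc X) K (upr \<rho>) u s \<Longrightarrow> XR X K \<rho> (Lam u) (Lam s)"
| xapp: "XR X K \<rho> u1 s1 \<Longrightarrow> XR X K \<rho> u2 s2 \<Longrightarrow> XR X K \<rho> (App u1 u2) (App s1 s2)"
| xmu: "XR X (Suc ` K) \<rho> u s \<Longrightarrow> XR X K \<rho> (Mu u) (Mu s)"
| xnamed: "a \<notin> K \<Longrightarrow> XR X K \<rho> u s \<Longrightarrow> XR X K \<rho> (Named a u) (Named a s)"
| xsite: "a \<in> K \<Longrightarrow> XS X K \<rho> u s \<Longrightarrow> XR X K \<rho> (Named a u) (Named a s)"
| s1: "XR X K \<rho> u s \<Longrightarrow> XS X K \<rho> u (App s (Var X))"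
| s2: "XR X K (case_nat X \<rho>) u s \<Longrightarrow> XS X K \<rho> (Lam u) s"
| s3: "XR X (insert 0 (Suc ` K)) \<rho> u s \<Longrightarrow> XS X K \<rho> (Mu u) (Mu s)"

lemma xvar': "\<rho> i = j \<Longrightarrow> XR X K \<rho> (Var i) (Var j)"
  using xvar by blast

lemma RN:
  "XR X K \<rho> p p' \<Longrightarrow> (\<And>f g \<rho>'. (\<forall>i. \<rho>' (f i) = g (\<rho> i)) \<Longrightarrow>
      XR (g X) K \<rho>' (psL (\<lambda>i. Var (f i)) p) (psL (\<lambda>i. Var (g i)) p'))"
  "XS X K \<rho> p p' \<Longrightarrow> (\<And>f g \<rho>'. (\<forall>i. \<rho>' (f i) = g (\<rho> i)) \<Longrightarrow>
      XS (g X) K \<rho>' (psL (\<lambda>i. Var (f i)) p) (psL (\<lambda>i. Var (g i)) p'))"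
proof (induction rule: XR_XS.inducts)
  case (xvar X K \<rho> i)
  then show ?case by (auto intro: xvar')
next
  case (xlam X K \<rho> u s)
  have "\<forall>i. upr \<rho>' (upr f i) = upr g (upr \<rho> i)" using xlam.prems
    by (auto simp: upr_def split: nat.split)
  from xlam.IH[where f="upr f" and g="upr g" and \<rho>'="upr \<rho>'", OF this] show ?case
    by (simp add: upS_Var XR_XS.xlam)
next
  case (s2 X K \<rho> u s)
  have "\<forall>i. case_nat (g X) \<rho>' (upr f i) = g (case_nat X \<rho> i)" using s2.prems
    by (auto simp: upr_def split: nat.split)
  from s2.IH[where f="upr f" and g="g" and \<rho>'="case_nat (g X) \<rho>'", OF this] show ?case
    by (simp add: upS_Var XR_XS.s2)
next
  case (xapp X K \<rho> u1 s1 u2 s2)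
  then show ?case by (simp add: XR_XS.xapp)
next
  case (xmu X K \<rho> u s)
  then show ?case by (simp add: XR_XS.xmu)
next
  case (xnamed a K X \<rho> u s)
  then show ?case by (simp add: XR_XS.xnamed)
next
  case (xsite a K X \<rho> u s)
  then show ?case by (simp add: XR_XS.xsite)
next
  case (s1 X K \<rho> u s)
  then show ?case using XR_XS.s1 by simp
next
  case (s3 X K \<rho> u s)
  then show ?case by (simp add: XR_XS.s3)
qed

lemma liftL0_ps: "liftL 0 t = psL (\<lambda>i. Var (Suc i)) t"
  by (simp add: liftL_ps)

lemma RN_lift: "XR X K \<rho> p p' \<Longrightarrow> XR (Suc X) K (upr \<rho>) (liftL 0 p) (liftL 0 p')"
  using RN(1)[of X K \<rho> p p' "upr \<rho>" Suc Suc] by (simp add: liftL0_ps)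

lemma RN_liftu: "XR X K \<rho> p p' \<Longrightarrow> XR X K (case_nat Z \<rho>) (liftL 0 p) p'"
  using RN(1)[of X K \<rho> p p' "case_nat Z \<rho>" Suc "\<lambda>i. i"] by (simp add: liftL0_ps psL_Var)

lemma liftn_Suc:
  assumes "\<forall>a. a\<in>K \<longleftrightarrow> (if a<k then a else Suc a) \<in> K2"
  shows "\<forall>a. a \<in> Suc`K \<longleftrightarrow> (if a < Suc k then a else Suc a) \<in> Suc`K2"
proof
  fix a show "a \<in> Suc`K \<longleftrightarrow> (if a < Suc k then a else Suc a) \<in> Suc`K2"
    using assms by (cases a) (auto simp: inj_image_mem_iff)
qed

lemma liftn_Suc0:
  assumes "\<forall>a. a\<in>K \<longleftrightarrow> (if a<k then a else Suc a) \<in> K2"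
  shows "\<forall>a. a \<in> insert 0 (Suc`K) \<longleftrightarrow> (if a < Suc k then a else Suc a) \<in> insert 0 (Suc`K2)"
proof
  fix a show "a \<in> insert 0 (Suc`K) \<longleftrightarrow> (if a < Suc k then a else Suc a) \<in> insert 0 (Suc`K2)"
    using assms by (cases a) (auto simp: inj_image_mem_iff)
qed

lemma LM:
  "XR X K \<rho> p p' \<Longrightarrow> (\<And>k K2. (\<forall>a. a\<in>K \<longleftrightarrow> (if a<k then a else Suc a) \<in> K2) \<Longrightarrow>
      XR X K2 \<rho> (liftM k p) (liftM k p'))"
  "XS X K \<rho> p p' \<Longrightarrow> (\<And>k K2. (\<forall>a. a\<in>K \<longleftrightarrow> (if a<k then a else Suc a) \<in> K2) \<Longrightarrow>
      XS X K2 \<rho> (liftM k p) (liftM k p'))"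
proof (induction rule: XR_XS.inducts)
  case (xmu X K \<rho> u s)
  then show ?case using liftn_Suc[OF xmu.prems] by (simp add: XR_XS.xmu)
next
  case (s3 X K \<rho> u s)
  then show ?case using liftn_Suc0[OF s3.prems] by (simp add: XR_XS.s3)
next
  case (xnamed a K X \<rho> u s)
  then show ?case by (simp add: XR_XS.xnamed)
next
  case (xsite a K X \<rho> u s)
  then show ?case by (simp add: XR_XS.xsite)
next
  case (s1 X K \<rho> u s)
  then show ?case using XR_XS.s1 by simp
qed (simp_all add: XR_XS.intros)

lemma LM0: "XR X K \<rho> p p' \<Longrightarrow> XR X (Suc`K) \<rho> (liftM 0 p) (liftM 0 p')"
  by (rule LM(1)) (auto simp: inj_image_mem_iff)

lemma LM0i: "XR X K \<rho> p p' \<Longrightarrow> XR X (insert 0 (Suc`K)) \<rho> (liftM 0 p) (liftM 0 p')"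
  by (rule LM(1)) (auto simp: inj_image_mem_iff)

lemma PS:
  "XR X K \<rho> a a' \<Longrightarrow> (\<And>\<sigma> \<sigma>' Y \<tau>. (\<forall>i. XR Y K \<tau> (\<sigma> i) (\<sigma>' (\<rho> i))) \<Longrightarrow> \<sigma>' X = Var Y \<Longrightarrow>
      XR Y K \<tau> (psL \<sigma> a) (psL \<sigma>' a'))"
  "XS X K \<rho> a a' \<Longrightarrow> (\<And>\<sigma> \<sigma>' Y \<tau>. (\<forall>i. XR Y K \<tau> (\<sigma> i) (\<sigma>' (\<rho> i))) \<Longrightarrow> \<sigma>' X = Var Y \<Longrightarrow>
      XS Y K \<tau> (psL \<sigma> a) (psL \<sigma>' a'))"
proof (induction rule: XR_XS.inducts)
  case (xvar X K \<rho> i)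
  then show ?case by simp
next
  case (xlam X K \<rho> u s)
  have "\<forall>i. XR (Suc Y) K (upr \<tau>) (case_nat (Var 0) (\<lambda>i. liftL 0 (\<sigma> i)) i)
            (case_nat (Var 0) (\<lambda>i. liftL 0 (\<sigma>' i)) (upr \<rho> i))"
  proof
    fix i show "XR (Suc Y) K (upr \<tau>) (case_nat (Var 0) (\<lambda>i. liftL 0 (\<sigma> i)) i)
            (case_nat (Var 0) (\<lambda>i. liftL 0 (\<sigma>' i)) (upr \<rho> i))"
      using xlam.prems(1) by (cases i) (auto intro: xvar' RN_lift)
  qed
  from xlam.IH[OF this] xlam.prems(2) show ?case by (simp add: XR_XS.xlam)
next
  case (xapp X K \<rho> u1 s1 u2 s2)
  then show ?case by (simp add: XR_XS.xapp)
next
  case (xmu X K \<rho> u s)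
  have "\<forall>i. XR Y (Suc`K) \<tau> (liftM 0 (\<sigma> i)) (liftM 0 (\<sigma>' (\<rho> i)))"
    using xmu.prems(1) by (auto intro: LM0)
  from xmu.IH[OF this] xmu.prems(2) show ?case by (simp add: XR_XS.xmu)
next
  case (xnamed a K X \<rho> u s)
  then show ?case by (simp add: XR_XS.xnamed)
next
  case (xsite a K X \<rho> u s)
  then show ?case by (simp add: XR_XS.xsite)
next
  case (s1 X K \<rho> u s)
  then show ?case using XR_XS.s1 by simp
next
  case (s2 X K \<rho> u s)
  have "\<forall>i. XR Y K (case_nat Y \<tau>) (case_nat (Var 0) (\<lambda>i. liftL 0 (\<sigma> i)) i)
            (\<sigma>' (case_nat X \<rho> i))"
  proof
    fix i show "XR Y K (case_nat Y \<tau>) (case_nat (Var 0) (\<lambda>i. liftL 0 (\<sigma> i)) i)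
            (\<sigma>' (case_nat X \<rho> i))"
      using s2.prems by (cases i) (auto intro: xvar' RN_liftu)
  qed
  from s2.IH[OF this] s2.prems(2) show ?case by (simp add: XR_XS.s2)
next
  case (s3 X K \<rho> u s)
  have "\<forall>i. XR Y (insert 0 (Suc`K)) \<tau> (liftM 0 (\<sigma> i)) (liftM 0 (\<sigma>' (\<rho> i)))"
    using s3.prems(1) by (auto intro: LM0i)
  from s3.IH[OF this] s3.prems(2) show ?case by (simp add: XR_XS.s3)
qed

lemma SM:
  "XR X K \<rho> a a' \<Longrightarrow> (\<And>k v v'. k \<notin> K \<Longrightarrow> XR X K \<rho> v v' \<Longrightarrow>
      XR X K \<rho> (substM a k v) (substM a' k v'))"
  "XS X K \<rho> a a' \<Longrightarrow> (\<And>k v v'. k \<notin> K \<Longrightarrow> XR X K \<rho> v v' \<Longrightarrow>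
      XS X K \<rho> (substM a k v) (substM a' k v'))"
proof (induction rule: XR_XS.inducts)
  case (xlam X K \<rho> u s)
  then show ?case by (simp add: XR_XS.xlam RN_lift)
next
  case (xmu X K \<rho> u s)
  have "Suc k \<notin> Suc`K" using xmu.prems by auto
  then show ?case using xmu by (simp add: XR_XS.xmu LM0)
next
  case (xnamed a K X \<rho> u s)
  have "XR X K \<rho> (substM u k v) (substM s k v')" using xnamed by blast
  show ?case
  proof (cases "a = k")
    case True
    then show ?thesis using xnamed \<open>XR X K \<rho> (substM u k v) (substM s k v')\<close>
      by (simp add: XR_XS.xnamed XR_XS.xapp)
  next
    case False
    then show ?thesis using xnamed \<open>XR X K \<rho> (substM u k v) (substM s k v')\<close>
      by (simp add: XR_XS.xnamed)
  qed
next
  case (xsite a K X \<rho> u s)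
  then have "a \<noteq> k" by auto
  then show ?case using xsite by (simp add: XR_XS.xsite)
next
  case (s1 X K \<rho> u s)
  then show ?case using XR_XS.s1 by simp
next
  case (s2 X K \<rho> u s)
  then show ?case by (simp add: XR_XS.s2 RN_liftu)
next
  case (s3 X K \<rho> u s)
  have "Suc k \<notin> insert 0 (Suc`K)" using s3.prems by auto
  then show ?case using s3 by (simp add: XR_XS.s3 LM0i)
qed (auto intro: XR_XS.intros)

lemma MK:
  "XR X K \<rho> a a' \<Longrightarrow> (\<And>k. k \<notin> K \<Longrightarrow> XR X (insert k K) \<rho> a (substM a' k (Var X)))"
  "XS X K \<rho> a a' \<Longrightarrow> (\<And>k. k \<notin> K \<Longrightarrow> XS X (insert k K) \<rho> a (substM a' k (Var X)))"
proof (induction rule: XR_XS.inducts)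
  case (xlam X K \<rho> u s)
  then show ?case by (simp add: XR_XS.xlam)
next
  case (xmu X K \<rho> u s)
  have "Suc k \<notin> Suc`K" using xmu.prems by auto
  moreover have "insert (Suc k) (Suc`K) = Suc ` insert k K" by simp
  ultimately show ?case using xmu by (metis XR_XS.xmu substM.simps(4) liftM.simps(1))
next
  case (xnamed a K X \<rho> u s)
  show ?case
  proof (cases "a = k")
    case True
    then show ?thesis using xnamed by (auto intro: XR_XS.intros)
  next
    case False
    then show ?thesis using xnamed by (auto intro: XR_XS.intros)
  qed
next
  case (xsite a K X \<rho> u s)
  then have "a \<noteq> k" by auto
  then show ?case using xsite by (simp add: XR_XS.xsite)
next
  case (s1 X K \<rho> u s)
  then show ?case using XR_XS.s1 by simp
next
  case (s2 X K \<rho> u s)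
  then show ?case by (simp add: XR_XS.s2)
next
  case (s3 X K \<rho> u s)
  have "Suc k \<notin> insert 0 (Suc`K)" using s3.prems by auto
  moreover have "insert (Suc k) (insert 0 (Suc`K)) = insert 0 (Suc ` insert k K)" by auto
  ultimately show ?case using s3 by (metis XR_XS.s3 substM.simps(4) liftM.simps(1))
qed (auto intro: XR_XS.intros)

lemma reds_Lam: "reds t t' \<Longrightarrow> reds (Lam t) (Lam t')"
  by (induction rule: rtranclp_induct) (auto intro: rtranclp.rtrancl_into_rtrancl red1.lam)
lemma reds_Mu: "reds t t' \<Longrightarrow> reds (Mu t) (Mu t')"
  by (induction rule: rtranclp_induct) (auto intro: rtranclp.rtrancl_into_rtrancl red1.muc)
lemma reds_Named: "reds t t' \<Longrightarrow> reds (Named a t) (Named a t')"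
  by (induction rule: rtranclp_induct) (auto intro: rtranclp.rtrancl_into_rtrancl red1.named)
lemma reds_AppL: "reds t t' \<Longrightarrow> reds (App t u) (App t' u)"
  by (induction rule: rtranclp_induct) (auto intro: rtranclp.rtrancl_into_rtrancl red1.appL)
lemma reds_AppR: "reds u u' \<Longrightarrow> reds (App t u) (App t u')"
  by (induction rule: rtranclp_induct) (auto intro: rtranclp.rtrancl_into_rtrancl red1.appR)
lemma reds_App: "reds t t' \<Longrightarrow> reds u u' \<Longrightarrow> reds (App t u) (App t' u')"
  by (meson reds_AppL reds_AppR rtranclp_trans)

inductive_cases XR_AppE: "XR X K \<rho> u (App s1 s2)"
inductive_cases XR_LamE: "XR X K \<rho> u (Lam s)"
inductive_cases XR_MuE: "XR X K \<rho> u (Mu s)"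
inductive_cases XR_NamedE: "XR X K \<rho> u (Named a s)"
inductive_cases XS_E: "XS X K \<rho> u s"
inductive_cases red1_VarE: "red1 (Var i) t"

lemma XS_step:
  assumes ex: "\<forall>X K \<rho> u. XR X K \<rho> u s \<longrightarrow> (\<exists>u'. reds u u' \<and> XR X K \<rho> u' s')"
    and a1: "\<And>X K \<rho> u s0. s = App s0 (Var X) \<Longrightarrow> XR X K \<rho> u s0 \<Longrightarrow> \<exists>u'. reds u u' \<and> XS X K \<rho> u' s'"
    and a3: "\<And>X K \<rho> u q. s = Mu q \<Longrightarrow> XR X (insert 0 (Suc`K)) \<rho> u q \<Longrightarrow>
               \<exists>u'. reds (Mu u) u' \<and> XS X K \<rho> u' s'"
  shows "\<forall>X K \<rho> u. XS X K \<rho> u s \<longrightarrow> (\<exists>u'. reds u u' \<and> XS X K \<rho> u' s')"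
proof (intro allI impI)
  fix X K \<rho> u assume h: "XS X K \<rho> u s"
  have "(\<exists>s0. s = App s0 (Var X) \<and> XR X K \<rho> u s0) \<or> (\<exists>r1. u = Lam r1 \<and> XR X K (case_nat X \<rho>) r1 s)
     \<or> (\<exists>r1 q. u = Mu r1 \<and> s = Mu q \<and> XR X (insert 0 (Suc`K)) \<rho> r1 q)"
    using h by (auto elim!: XS_E)
  then show "\<exists>u'. reds u u' \<and> XS X K \<rho> u' s'"
  proof (elim disjE exE conjE)
    fix s0 assume "s = App s0 (Var X)" "XR X K \<rho> u s0"
    then show ?thesis using a1 by blast
  next
    fix r1 assume "u = Lam r1" "XR X K (case_nat X \<rho>) r1 s"
    then show ?thesis using ex by (metis reds_Lam XR_XS.s2)
  next
    fix r1 q assume "u = Mu r1" "s = Mu q" "XR X (insert 0 (Suc`K)) \<rho> r1 q"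
    then show ?thesis using a3 by blast
  qed
qed

lemma sk0_Var: "sk 0 (Var X) = (\<lambda>i. Var (case_nat X (\<lambda>i. i) i))"
  by (rule ext) (auto simp: sk_def split: nat.split)

lemma beta_site: "XR (Suc X) K (upr \<rho>) r1 b \<Longrightarrow> XR X K (case_nat X \<rho>) r1 (substL b 0 (Var X))"
  using RN(1)[of "Suc X" K "upr \<rho>" r1 b "case_nat X \<rho>" "\<lambda>i. i" "case_nat X (\<lambda>i. i)"]
  by (simp add: substL_ps sk0_Var psL_Var split: nat.split)

lemma beta_rel:
  assumes "XR (Suc X) K (upr \<rho>) u11 b" "XR X K \<rho> u2 c"
  shows "XR X K \<rho> (substL u11 0 u2) (substL b 0 c)"
proof -
  have "\<forall>i. XR X K \<rho> (sk 0 u2 i) (sk 0 c (upr \<rho> i))"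
  proof
    fix i show "XR X K \<rho> (sk 0 u2 i) (sk 0 c (upr \<rho> i))"
      using assms(2) by (cases i) (auto simp: sk_def intro: xvar')
  qed
  moreover have "sk 0 c (Suc X) = Var X" by (simp add: sk_def)
  ultimately show ?thesis using PS(1)[OF assms(1)] by (simp add: substL_ps)
qed

lemma SIM:
  "red1 s s' \<Longrightarrow> (\<forall>X K \<rho> u. XR X K \<rho> u s \<longrightarrow> (\<exists>u'. reds u u' \<and> XR X K \<rho> u' s')) \<and>
                  (\<forall>X K \<rho> u. XS X K \<rho> u s \<longrightarrow> (\<exists>u'. reds u u' \<and> XS X K \<rho> u' s'))"
proof (induction rule: red1.induct)
  case (beta b c)
  have ex: "\<forall>X K \<rho> u. XR X K \<rho> u (App (Lam b) c) \<longrightarrow> (\<exists>u'. reds u u' \<and> XR X K \<rho> u' (substL b 0 c))"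
  proof (intro allI impI)
    fix X K \<rho> u assume "XR X K \<rho> u (App (Lam b) c)"
    then obtain u11 u2 where u: "u = App (Lam u11) u2" "XR (Suc X) K (upr \<rho>) u11 b" "XR X K \<rho> u2 c"
      by (auto elim!: XR_AppE XR_LamE)
    have "reds u (substL u11 0 u2)" using u(1) red1.beta by auto
    then show "\<exists>u'. reds u u' \<and> XR X K \<rho> u' (substL b 0 c)" using beta_rel[OF u(2,3)] by blast
  qed
  moreover have "\<forall>X K \<rho> u. XS X K \<rho> u (App (Lam b) c) \<longrightarrow> (\<exists>u'. reds u u' \<and> XS X K \<rho> u' (substL b 0 c))"
  proof (rule XS_step[OF ex])
    fix X K \<rho> u s0 assume "App (Lam b) c = App s0 (Var X)" "XR X K \<rho> u s0"
    then obtain r1 where "u = Lam r1" "XR (Suc X) K (upr \<rho>) r1 b" "c = Var X"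
      by (auto elim!: XR_LamE)
    then show "\<exists>u'. reds u u' \<and> XS X K \<rho> u' (substL b 0 c)"
      using beta_site XR_XS.s2 by blast
  qed simp
  ultimately show ?case by blast
next
  case (mu b c)
  have ex: "\<forall>X K \<rho> u. XR X K \<rho> u (App (Mu b) c) \<longrightarrow> (\<exists>u'. reds u u' \<and> XR X K \<rho> u' (Mu (substM b 0 (liftM 0 c))))"
  proof (intro allI impI)
    fix X K \<rho> u assume "XR X K \<rho> u (App (Mu b) c)"
    then obtain u11 u2 where u: "u = App (Mu u11) u2" "XR X (Suc`K) \<rho> u11 b" "XR X K \<rho> u2 c"
      by (auto elim!: XR_AppE XR_MuE)
    have "reds u (Mu (substM u11 0 (liftM 0 u2)))" using u(1) red1.mu by auto
    moreover have "XR X K \<rho> (Mu (substM u11 0 (liftM 0 u2))) (Mu (substM b 0 (liftM 0 c)))"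
      by (rule xmu, rule SM(1)[OF u(2)]) (auto intro: LM0 u(3))
    ultimately show "\<exists>u'. reds u u' \<and> XR X K \<rho> u' (Mu (substM b 0 (liftM 0 c)))" by blast
  qed
  moreover have "\<forall>X K \<rho> u. XS X K \<rho> u (App (Mu b) c) \<longrightarrow> (\<exists>u'. reds u u' \<and> XS X K \<rho> u' (Mu (substM b 0 (liftM 0 c))))"
  proof (rule XS_step[OF ex])
    fix X K \<rho> u s0 assume "App (Mu b) c = App s0 (Var X)" "XR X K \<rho> u s0"
    then obtain r1 where r: "u = Mu r1" "XR X (Suc`K) \<rho> r1 b" "c = Var X"
      by (auto elim!: XR_MuE)
    have "XR X (insert 0 (Suc`K)) \<rho> r1 (substM b 0 (Var X))" using MK(1)[OF r(2)] by auto
    then show "\<exists>u'. reds u u' \<and> XS X K \<rho> u' (Mu (substM b 0 (liftM 0 c)))"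
      using r XR_XS.s3 by auto
  qed simp
  ultimately show ?case by blast
next
  case (lam t t')
  have ex: "\<forall>X K \<rho> u. XR X K \<rho> u (Lam t) \<longrightarrow> (\<exists>u'. reds u u' \<and> XR X K \<rho> u' (Lam t'))"
  proof (intro allI impI)
    fix X K \<rho> u assume "XR X K \<rho> u (Lam t)"
    then obtain u1 where "u = Lam u1" "XR (Suc X) K (upr \<rho>) u1 t" by (auto elim!: XR_LamE)
    then show "\<exists>u'. reds u u' \<and> XR X K \<rho> u' (Lam t')" using lam.IH
      by (blast intro: reds_Lam xlam)
  qed
  moreover have "\<forall>X K \<rho> u. XS X K \<rho> u (Lam t) \<longrightarrow> (\<exists>u'. reds u u' \<and> XS X K \<rho> u' (Lam t'))"
    by (rule XS_step[OF ex]) auto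
  ultimately show ?case by blast
next
  case (appL t t' v)
  have ex: "\<forall>X K \<rho> u. XR X K \<rho> u (App t v) \<longrightarrow> (\<exists>u'. reds u u' \<and> XR X K \<rho> u' (App t' v))"
  proof (intro allI impI)
    fix X K \<rho> u assume "XR X K \<rho> u (App t v)"
    then obtain u1 u2 where "u = App u1 u2" "XR X K \<rho> u1 t" "XR X K \<rho> u2 v" by (auto elim!: XR_AppE)
    then show "\<exists>u'. reds u u' \<and> XR X K \<rho> u' (App t' v)" using appL.IH
      by (blast intro: reds_AppL xapp)
  qed
  moreover have "\<forall>X K \<rho> u. XS X K \<rho> u (App t v) \<longrightarrow> (\<exists>u'. reds u u' \<and> XS X K \<rho> u' (App t' v))"
  proof (rule XS_step[OF ex])
    fix X K \<rho> u s0 assume "App t v = App s0 (Var X)" "XR X K \<rho> u s0"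
    then show "\<exists>u'. reds u u' \<and> XS X K \<rho> u' (App t' v)" using appL.IH
      by (blast intro: XR_XS.s1)
  qed simp
  ultimately show ?case by blast
next
  case (appR v v' t)
  have ex: "\<forall>X K \<rho> u. XR X K \<rho> u (App t v) \<longrightarrow> (\<exists>u'. reds u u' \<and> XR X K \<rho> u' (App t v'))"
  proof (intro allI impI)
    fix X K \<rho> u assume "XR X K \<rho> u (App t v)"
    then obtain u1 u2 where "u = App u1 u2" "XR X K \<rho> u1 t" "XR X K \<rho> u2 v" by (auto elim!: XR_AppE)
    then show "\<exists>u'. reds u u' \<and> XR X K \<rho> u' (App t v')" using appR.IH
      by (blast intro: reds_AppR xapp)
  qed
  moreover have "\<forall>X K \<rho> u. XS X K \<rho> u (App t v) \<longrightarrow> (\<exists>u'. reds u u' \<and> XS X K \<rho> u' (App t v'))"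
  proof (rule XS_step[OF ex])
    fix X K \<rho> u s0 assume "App t v = App s0 (Var X)" "XR X K \<rho> u s0"
    then show "\<exists>u'. reds u u' \<and> XS X K \<rho> u' (App t v')" using appR.hyps
      by (auto elim: red1_VarE)
  qed simp
  ultimately show ?case by blast
next
  case (muc t t')
  have ex: "\<forall>X K \<rho> u. XR X K \<rho> u (Mu t) \<longrightarrow> (\<exists>u'. reds u u' \<and> XR X K \<rho> u' (Mu t'))"
  proof (intro allI impI)
    fix X K \<rho> u assume "XR X K \<rho> u (Mu t)"
    then obtain u1 where "u = Mu u1" "XR X (Suc`K) \<rho> u1 t" by (auto elim!: XR_MuE)
    then show "\<exists>u'. reds u u' \<and> XR X K \<rho> u' (Mu t')" using muc.IH
      by (blast intro: reds_Mu xmu)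
  qed
  moreover have "\<forall>X K \<rho> u. XS X K \<rho> u (Mu t) \<longrightarrow> (\<exists>u'. reds u u' \<and> XS X K \<rho> u' (Mu t'))"
  proof (rule XS_step[OF ex])
    fix X K \<rho> u q assume "Mu t = Mu q" "XR X (insert 0 (Suc`K)) \<rho> u q"
    then show "\<exists>u'. reds (Mu u) u' \<and> XS X K \<rho> u' (Mu t')" using muc.IH
      by (blast intro: reds_Mu XR_XS.s3)
  qed simp
  ultimately show ?case by blast
next
  case (named t t' a)
  have ex: "\<forall>X K \<rho> u. XR X K \<rho> u (Named a t) \<longrightarrow> (\<exists>u'. reds u u' \<and> XR X K \<rho> u' (Named a t'))"
  proof (intro allI impI)
    fix X K \<rho> u assume "XR X K \<rho> u (Named a t)"
    then have "(\<exists>u1. u = Named a u1 \<and> a \<notin> K \<and> XR X K \<rho> u1 t) \<or> (\<exists>u1. u = Named a u1 \<and> a \<in> K \<and> XS X K \<rho> u1 t)"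
      by (auto elim!: XR_NamedE)
    then show "\<exists>u'. reds u u' \<and> XR X K \<rho> u' (Named a t')"
      using named.IH by (blast intro: reds_Named XR_XS.xnamed XR_XS.xsite)
  qed
  moreover have "\<forall>X K \<rho> u. XS X K \<rho> u (Named a t) \<longrightarrow> (\<exists>u'. reds u u' \<and> XS X K \<rho> u' (Named a t'))"
    by (rule XS_step[OF ex]) auto
  ultimately show ?case by blast
qed

lemma SIMs: "reds s s' \<Longrightarrow> XS X K \<rho> u s \<Longrightarrow> \<exists>u'. reds u u' \<and> XS X K \<rho> u' s'"
proof (induction arbitrary: u rule: rtranclp_induct)
  case base
  then show ?case by blast
next
  case (step y z)
  then obtain u1 where "reds u u1" "XS X K \<rho> u1 y" by blast
  with SIM[OF step.hyps(2)] show ?case by (meson rtranclp_trans)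
qed

inductive_cases typ_VarE: "typing \<Gamma> (Var i) A \<Delta>"
inductive_cases typ_LamE: "typing \<Gamma> (Lam t) A \<Delta>"
inductive_cases typ_AppE: "typing \<Gamma> (App t u) A \<Delta>"
inductive_cases typ_MuE: "typing \<Gamma> (Mu t) A \<Delta>"
inductive_cases typ_NamedE: "typing \<Gamma> (Named a t) A \<Delta>"

lemma TY:
  "XR X K \<rho> u s \<Longrightarrow> (\<And>\<Gamma>' \<Delta>' A \<Gamma> \<Delta>. typing \<Gamma>' s A \<Delta>' \<Longrightarrow> \<Gamma>' X = B \<Longrightarrow> (\<forall>i. \<Gamma>' (\<rho> i) = \<Gamma> i) \<Longrightarrow>
     (\<forall>a\<in>K. \<Delta> a = Arr B (\<Delta>' a)) \<Longrightarrow> (\<forall>a. a \<notin> K \<longrightarrow> \<Delta> a = \<Delta>' a) \<Longrightarrow> typing \<Gamma> u A \<Delta>)"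
  "XS X K \<rho> u s \<Longrightarrow> (\<And>\<Gamma>' \<Delta>' A \<Gamma> \<Delta>. typing \<Gamma>' s A \<Delta>' \<Longrightarrow> \<Gamma>' X = B \<Longrightarrow> (\<forall>i. \<Gamma>' (\<rho> i) = \<Gamma> i) \<Longrightarrow>
     (\<forall>a\<in>K. \<Delta> a = Arr B (\<Delta>' a)) \<Longrightarrow> (\<forall>a. a \<notin> K \<longrightarrow> \<Delta> a = \<Delta>' a) \<Longrightarrow> typing \<Gamma> u (Arr B A) \<Delta>)"
proof (induction rule: XR_XS.inducts)
  case (xvar X K \<rho> i)
  then show ?case by (auto elim!: typ_VarE intro: typing.ax)
next
  case (xlam X K \<rho> u s)
  from xlam.prems(1) obtain A1 A2 where A: "A = Arr A1 A2" "typing (case_nat A1 \<Gamma>') s A2 \<Delta>'"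
    by (auto elim!: typ_LamE)
  have "\<forall>i. case_nat A1 \<Gamma>' (upr \<rho> i) = case_nat A1 \<Gamma> i"
    using xlam.prems(3) by (auto split: nat.split)
  then have "typing (case_nat A1 \<Gamma>) u A2 \<Delta>"
    using xlam.IH[OF A(2)] xlam.prems by simp
  then show ?case using A by (simp add: typing.arrI)
next
  case (xapp X K \<rho> u1 s1 u2 s2)
  then show ?case by (blast elim!: typ_AppE intro: typing.arrE)
next
  case (xmu X K \<rho> u s)
  from xmu.prems(1) have T: "typing \<Gamma>' s Bot (case_nat A \<Delta>')" by (auto elim!: typ_MuE)
  have "\<forall>a\<in>Suc`K. case_nat A \<Delta> a = Arr B (case_nat A \<Delta>' a)" using xmu.prems(4) by auto
  moreover have "\<forall>a. a \<notin> Suc`K \<longrightarrow> case_nat A \<Delta> a = case_nat A \<Delta>' a"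
  proof (intro allI impI)
    fix a assume "a \<notin> Suc`K" then show "case_nat A \<Delta> a = case_nat A \<Delta>' a"
      using xmu.prems(5) by (cases a) auto
  qed
  ultimately have "typing \<Gamma> u Bot (case_nat A \<Delta>)"
    using xmu.IH[OF T] xmu.prems(2,3) by simp
  then show ?case by (rule typing.muI)
next
  case (xnamed a K X \<rho> u s)
  from xnamed.prems(1) have "A = Bot" "typing \<Gamma>' s (\<Delta>' a) \<Delta>'" by (auto elim!: typ_NamedE)
  then have "typing \<Gamma> u (\<Delta>' a) \<Delta>" using xnamed.IH xnamed.prems by blast
  then show ?case using \<open>A = Bot\<close> xnamed.prems(5) xnamed.hyps(1) by (auto intro: typing.botI)
next
  case (xsite a K X \<rho> u s)
  from xsite.prems(1) have "A = Bot" "typing \<Gamma>' s (\<Delta>' a) \<Delta>'" by (auto elim!: typ_NamedE)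
  then have "typing \<Gamma> u (Arr B (\<Delta>' a)) \<Delta>" using xsite.IH xsite.prems by blast
  then show ?case using \<open>A = Bot\<close> xsite.prems(4) xsite.hyps(1) by (auto intro: typing.botI)
next
  case (s1 X K \<rho> u s)
  from s1.prems(1) obtain A1 where "typing \<Gamma>' s (Arr A1 A) \<Delta>'" "\<Gamma>' X = A1"
    by (auto elim!: typ_AppE typ_VarE)
  then show ?case using s1.IH s1.prems by auto
next
  case (s2 X K \<rho> u s)
  have "\<forall>i. \<Gamma>' (case_nat X \<rho> i) = case_nat B \<Gamma> i"
    using s2.prems(2,3) by (auto split: nat.split)
  then have "typing (case_nat B \<Gamma>) u A \<Delta>" using s2.IH s2.prems by blast
  then show ?case by (rule typing.arrI)
next
  case (s3 X K \<rho> u s)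
  from s3.prems(1) have T: "typing \<Gamma>' s Bot (case_nat A \<Delta>')" by (auto elim!: typ_MuE)
  have "\<forall>a\<in>insert 0 (Suc`K). case_nat (Arr B A) \<Delta> a = Arr B (case_nat A \<Delta>' a)"
    using s3.prems(4) by auto
  moreover have "\<forall>a. a \<notin> insert 0 (Suc`K) \<longrightarrow> case_nat (Arr B A) \<Delta> a = case_nat A \<Delta>' a"
  proof (intro allI impI)
    fix a assume "a \<notin> insert 0 (Suc`K)" then show "case_nat (Arr B A) \<Delta> a = case_nat A \<Delta>' a"
      using s3.prems(5) by (cases a) auto
  qed
  ultimately have "typing \<Gamma> u Bot (case_nat (Arr B A) \<Delta>)"
    using s3.IH[OF T] s3.prems(2,3) by simp
  then show ?case by (rule typing.muI)
qed

lemma XR_refl: "\<forall>i. \<rho> i = i \<Longrightarrow> XR X {} \<rho> t t"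
proof (induction t arbitrary: X \<rho>)
  case (Var x)
  then show ?case by (auto intro: xvar')
next
  case (Lam t)
  have "\<forall>i. upr \<rho> i = i" using Lam.prems by (auto simp: upr_def split: nat.split)
  then show ?case using Lam.IH by (blast intro: xlam)
next
  case (App t1 t2)
  then show ?case by (blast intro: xapp)
next
  case (Mu t)
  have "XR X (Suc`{}) \<rho> t t" using Mu.IH[OF Mu.prems] by simp
  then show ?case by (rule xmu)
next
  case (Named a t)
  then show ?case by (blast intro: xnamed)
qed

lemma key:
  assumes "reds (App t (Var X)) w" "typing G w C D"
  shows "typstar G D t (Arr (G X) C)"
proof -
  have "XS X {} (\<lambda>i. i) t (App t (Var X))" by (rule s1, rule XR_refl) simp
  with SIMs[OF assms(1)] obtain t' where "reds t t'" "XS X {} (\<lambda>i. i) t' w" by blast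
  moreover have "typing G t' (Arr (G X) C) D"
    using TY(2)[OF \<open>XS X {} (\<lambda>i. i) t' w\<close> assms(2), of "G X" G D] by simp
  ultimately show ?thesis unfolding typstar_def by blast
qed

theorem mainTheorem15:
  fixes G D :: "nat \<Rightarrow> ty" and A :: ty and t :: trm
  assumes "\<And>T. infinite {i. G i = T}"
    and "surj D"
    and "infinite {j. D j = Bot}"
  shows "(typstar G D t A \<longrightarrow> t \<in> interp G D A) \<and>
         (t \<in> interp G D A \<longrightarrow> typstar G D t A)"
proof (induction A arbitrary: t)
  case (PV x)
  then show ?case by (simp add: RR_def)
next
  case Bot
  then show ?case by (simp add: SS_def)
next
  case (Arr B C)
  have d1: "t \<in> interp G D (Arr B C)" if h: "typstar G D t (Arr B C)"
  proof -
    from h obtain t0 where t0: "reds t t0" "typing G t0 (Arr B C) D" unfolding typstar_def by blast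
    have "App t v \<in> interp G D C" if "v \<in> interp G D B" for v
    proof -
      from that Arr.IH(1) obtain v0 where "reds v v0" "typing G v0 B D"
        unfolding typstar_def by blast
      then have "typstar G D (App t v) C" unfolding typstar_def
        using t0 by (blast intro: reds_App typing.arrE)
      then show ?thesis using Arr.IH(2) by blast
    qed
    then show ?thesis by (simp add: arrow_set_def)
  qed
  have d2: "typstar G D t (Arr B C)" if h: "t \<in> interp G D (Arr B C)"
  proof -
    from assms(1)[of B] have "{i. G i = B} \<noteq> {}" by (metis finite.emptyI)
    then obtain X where X: "G X = B" by blast
    have "typstar G D (Var X) B" unfolding typstar_def using X by (blast intro: typing.ax)
    then have "Var X \<in> interp G D B" using Arr.IH(1) by blast
    then have "App t (Var X) \<in> interp G D C" using h by (simp add: arrow_set_def)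
    then have "typstar G D (App t (Var X)) C" using Arr.IH(2) by blast
    then obtain w where "reds (App t (Var X)) w" "typing G w C D" unfolding typstar_def by blast
    from key[OF this] X show ?thesis by simp
  qed
  show ?case using d1 d2 by blast
qed

end
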